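(* Let $q$ be a prime power and $X\subseteq\mathbb{P}^2$ the Hermitian curve over $\mathbb{F}_{q^2}$. Fix an integer $e\in\{2,\dots,q+1\}$ and a point $P\in X(\mathbb{F}_{q^2})$. Let $E\subseteq X$ be the divisor $eP$, seen as a closed degree $e$ subscheme of $\mathbb{P}^2$. Let $T\subseteq\mathbb{P}^2$ be any effective divisor (a plane curve, possibly with multiple components) of degree at most $e-1$ containing $E$. Then $L_{X,P}\subseteq T$, i.e. $L_{X,P}$ is one of the components of $T$.
   Context: $\mathbb{P}^2$ is the projective plane over $\mathbb{F}_{q^2}$ with coordinates $(x:y:z)$. The Hermitian curve $X$ is the projective plane curve with affine equation $y+y^q=x^{q+1}$; it is smooth of degree $q+1$. For $P\in X(\mathbb{F}_{q^2})$, $L_{X,P}$ denotes the tangent line to $X$ at $P$. *)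

theory Defs
  imports "HOL-Computational_Algebra.Polynomial" "HOL-Library.Cardinality"
begin

text \<open>Polynomials in three variables X, Y, Z over a ring 'a are encoded as nested
univariate polynomials: an element of 'a poly poly poly is a polynomial in Z whose
coefficients are polynomials in Y whose coefficients are polynomials in X.\<close>

type_synonym 'a poly3 = "'a poly poly poly"

definition cst3 :: "'a::comm_ring_1 \<Rightarrow> 'a poly3" where
  "cst3 c = [:[:[:c:]:]:]"

definition varX :: "'a::comm_ring_1 poly3" where
  "varX = [:[:[:0, 1:]:]:]"

definition varY :: "'a::comm_ring_1 poly3" where
  "varY = [:[:0, 1:]:]"

definition varZ :: "'a::comm_ring_1 poly3" where
  "varZ = [:0, 1:]"

definition coeff3 :: "'a::zero poly3 \<Rightarrow> nat \<Rightarrow> nat \<Rightarrow> nat \<Rightarrow> 'a" where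
  "coeff3 G i j k = coeff (coeff (coeff G k) j) i"

definition homogeneous3 :: "nat \<Rightarrow> 'a::zero poly3 \<Rightarrow> bool" where
  "homogeneous3 d G \<longleftrightarrow> (\<forall>i j k. coeff3 G i j k \<noteq> 0 \<longrightarrow> i + j + k = d)"

definition eval3 :: "'a::comm_ring_1 poly3 \<Rightarrow> 'a \<Rightarrow> 'a \<Rightarrow> 'a \<Rightarrow> 'a" where
  "eval3 G a b c = poly (map_poly (\<lambda>Q. poly (map_poly (\<lambda>p. poly p a) Q) b) G) c"

definition pdX :: "'a::idom poly3 \<Rightarrow> 'a poly3" where
  "pdX G = map_poly (map_poly pderiv) G"

definition pdY :: "'a::idom poly3 \<Rightarrow> 'a poly3" where
  "pdY G = map_poly pderiv G"

definition pdZ :: "'a::idom poly3 \<Rightarrow> 'a poly3" where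
  "pdZ G = pderiv G"

text \<open>The homogeneous equation of the Hermitian curve: Y Z^q + Y^q Z - X^(q+1)
(the homogenisation of y + y^q = x^(q+1)).\<close>
definition hermitian :: "nat \<Rightarrow> 'a::comm_ring_1 poly3" where
  "hermitian q = varY * varZ ^ q + varY ^ q * varZ - varX ^ (q + 1)"

definition linform :: "'a::comm_ring_1 \<Rightarrow> 'a \<Rightarrow> 'a \<Rightarrow> 'a poly3" where
  "linform a b c = cst3 a * varX + cst3 b * varY + cst3 c * varZ"

definition tangent_line :: "'a::idom poly3 \<Rightarrow> 'a \<Rightarrow> 'a \<Rightarrow> 'a \<Rightarrow> 'a poly3" where
  "tangent_line F a b c =
     linform (eval3 (pdX F) a b c) (eval3 (pdY F) a b c) (eval3 (pdZ F) a b c)"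

inductive_set ideal_gen :: "'a::comm_ring_1 set \<Rightarrow> 'a set" for S where
  zero: "0 \<in> ideal_gen S"
| step: "g \<in> S \<Longrightarrow> h \<in> ideal_gen S \<Longrightarrow> r * g + h \<in> ideal_gen S"

definition point_ideal_pow :: "'a::comm_ring_1 \<Rightarrow> 'a \<Rightarrow> 'a \<Rightarrow> nat \<Rightarrow> 'a poly3 set" where
  "point_ideal_pow a b c e = ideal_gen
     {prod_list (map (\<lambda>(u, v, w). linform u v w) ls) | ls.
        length ls = e \<and> (\<forall>(u, v, w) \<in> set ls. u * a + v * b + w * c = 0)}"

text \<open>The closed subscheme E = e P of the curve F = 0 (ideal (F) + m_P^e in the local
ring of the plane at P) is contained in the curve T = 0: in the local ring at P,
T lies in (F) + m_P^e, i.e. after clearing denominators there are a homogeneous U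
not vanishing at P and some A with U T - A F in the e-th power of the ideal of P.\<close>
definition subscheme_contained :: "'a::comm_ring_1 poly3 \<Rightarrow> 'a \<Rightarrow> 'a \<Rightarrow> 'a \<Rightarrow> nat \<Rightarrow> 'a poly3 \<Rightarrow> bool" where
  "subscheme_contained F a b c e T \<longleftrightarrow>
     (\<exists>U A u. homogeneous3 u U \<and> eval3 U a b c \<noteq> 0 \<and>
        U * T - A * F \<in> point_ideal_pow a b c e)"

end

theory Submission imports Defs "HOL-Computational_Algebra.Primes"
begin

definition rhom :: "('a::comm_ring_1 \<Rightarrow> 'b::comm_ring_1) \<Rightarrow> bool" where
  "rhom f \<longleftrightarrow> (\<forall>x y. f (x + y) = f x + f y) \<and> (\<forall>x y. f (x * y) = f x * f y) \<and> f 1 = 1"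

lemma rhomD:
  assumes "rhom f"
  shows "f (x + y) = f x + f y" "f (x * y) = f x * f y" "f 1 = 1" "f 0 = 0"
    "f (- x) = - f x" "f (x - y) = f x - f y" "f (x ^ n) = f x ^ n"
proof -
  show a: "f (x + y) = f x + f y" "f (x * y) = f x * f y" "f 1 = 1" using assms by (auto simp: rhom_def)
  have z: "f 0 = f 0 + f 0" using assms unfolding rhom_def by (metis add_0)
  show z0: "f 0 = 0" using z by simp
  have "f (- x + x) = f (- x) + f x" using assms unfolding rhom_def by blast
  then have "f (- x) + f x = 0" using z0 by simp
  then show m: "f (- x) = - f x" by (subst eq_neg_iff_add_eq_0)
  have "f (x + - y) = f x + f (- y)" using assms unfolding rhom_def by blast
  moreover have "f (- y) = - f y"
  proof -
    have "f (- y + y) = f (- y) + f y" using assms unfolding rhom_def by blast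
    then have "f (- y) + f y = 0" using z0 by simp
    then show ?thesis by (subst eq_neg_iff_add_eq_0)
  qed
  ultimately show "f (x - y) = f x - f y" by (simp only: diff_conv_add_uminus)
  show "f (x ^ n) = f x ^ n" using assms by (induct n) (auto simp: rhom_def)
qed

lemma rhom_prod_list: "rhom f \<Longrightarrow> f (prod_list xs) = prod_list (map f xs)"
  by (induct xs) (auto simp: rhomD)

definition ev1 :: "('a::comm_ring_1 \<Rightarrow> 'b::comm_ring_1) \<Rightarrow> 'b \<Rightarrow> 'a poly \<Rightarrow> 'b" where
  "ev1 h x p = poly (map_poly h p) x"

lemma ev1_pCons: "rhom h \<Longrightarrow> ev1 h x (pCons a p) = h a + x * ev1 h x p"
  by (simp add: ev1_def map_poly_pCons rhomD)

lemma ev1_0[simp]: "ev1 h x 0 = 0"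
  by (simp add: ev1_def)

lemma ev1_const: "rhom h \<Longrightarrow> ev1 h x [:a:] = h a"
  by (simp add: ev1_pCons)

lemma ev1_add: "rhom h \<Longrightarrow> ev1 h x (p + q) = ev1 h x p + ev1 h x q"
proof -
  assume h: "rhom h"
  have "map_poly h (p + q) = map_poly h p + map_poly h q"
    by (rule poly_eqI) (simp add: coeff_map_poly rhomD[OF h])
  then show ?thesis by (simp add: ev1_def)
qed

lemma ev1_smult: "rhom h \<Longrightarrow> ev1 h x (smult a q) = h a * ev1 h x q"
proof -
  assume h: "rhom h"
  have "map_poly h (smult a q) = smult (h a) (map_poly h q)"
    by (rule poly_eqI) (simp add: coeff_map_poly rhomD[OF h])
  then show ?thesis by (simp add: ev1_def)
qed

lemma ev1_mult: "rhom h \<Longrightarrow> ev1 h x (p * q) = ev1 h x p * ev1 h x q"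
proof (induct p)
  case (pCons a p)
  have "ev1 h x (pCons a p * q) = ev1 h x (smult a q + pCons 0 (p * q))"
    by (simp only: mult_pCons_left)
  also have "\<dots> = h a * ev1 h x q + x * (ev1 h x p * ev1 h x q)"
    using pCons by (simp only: ev1_add ev1_smult ev1_pCons rhomD add_0)
  also have "\<dots> = ev1 h x (pCons a p) * ev1 h x q"
    using pCons by (simp add: ev1_pCons distrib_right mult.assoc)
  finally show ?case .
qed (simp add: ev1_def)

lemma rhom_ev1: "rhom h \<Longrightarrow> rhom (ev1 h x)"
proof -
  assume h: "rhom h"
  have "ev1 h x 1 = 1" using ev1_const[OF h, of x 1] rhomD(3)[OF h] by (simp only: one_pCons)
  then show ?thesis unfolding rhom_def using ev1_add[OF h] ev1_mult[OF h] by blast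
qed

lemma ev1_comp: "rhom h \<Longrightarrow> rhom \<Phi> \<Longrightarrow> \<Phi> (ev1 h x p) = ev1 (\<lambda>a. \<Phi> (h a)) (\<Phi> x) p"
proof (induct p)
  case (pCons a p)
  have r: "rhom (\<lambda>a. \<Phi> (h a))" using pCons.prems unfolding rhom_def by auto
  show ?case using pCons by (simp add: ev1_pCons r rhomD)
qed (simp add: ev1_def rhomD)

definition S3 :: "('a::comm_ring_1 \<Rightarrow> 'b::comm_ring_1) \<Rightarrow> 'b \<Rightarrow> 'b \<Rightarrow> 'b \<Rightarrow> 'a poly3 \<Rightarrow> 'b" where
  "S3 f x y z G = ev1 (ev1 (ev1 f x) y) z G"

lemma rhom_S3: "rhom f \<Longrightarrow> rhom (S3 f x y z)"
  unfolding S3_def by (intro rhom_ev1)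

lemma S3_comp: "rhom f \<Longrightarrow> rhom \<Phi> \<Longrightarrow> \<Phi> (S3 f x y z G) = S3 (\<lambda>a. \<Phi> (f a)) (\<Phi> x) (\<Phi> y) (\<Phi> z) G"
proof -
  assume f: "rhom f" and P: "rhom \<Phi>"
  have 1: "(\<lambda>Q. \<Phi> (ev1 (ev1 f x) y Q)) = ev1 (\<lambda>p. \<Phi> (ev1 f x p)) (\<Phi> y)"
    by (rule ext, rule ev1_comp[OF rhom_ev1[OF f] P])
  have 2: "(\<lambda>p. \<Phi> (ev1 f x p)) = ev1 (\<lambda>a. \<Phi> (f a)) (\<Phi> x)"
    by (rule ext, rule ev1_comp[OF f P])
  show ?thesis unfolding S3_def
    by (subst ev1_comp[OF rhom_ev1[OF rhom_ev1[OF f]] P]) (simp add: 1 2)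
qed

lemma S3_cst3: "rhom f \<Longrightarrow> S3 f x y z (cst3 c) = f c"
  by (simp add: S3_def cst3_def ev1_const rhom_ev1)
lemma S3_X: "rhom f \<Longrightarrow> S3 f x y z varX = x"
  by (simp add: S3_def varX_def ev1_const rhom_ev1 ev1_pCons rhomD)
lemma S3_Y: "rhom f \<Longrightarrow> S3 f x y z varY = y"
  by (simp add: S3_def varY_def ev1_const rhom_ev1 ev1_pCons rhomD)
lemma S3_Z: "rhom f \<Longrightarrow> S3 f x y z varZ = z"
  by (simp add: S3_def varZ_def ev1_const rhom_ev1 ev1_pCons rhomD)

lemma rhom_id: "rhom id" "rhom (\<lambda>x. x)" by (auto simp: rhom_def)

lemma eval3_S3: "eval3 G a b c = S3 (\<lambda>x. x) a b c G"
  unfolding eval3_def S3_def ev1_def[abs_def] by simp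

lemma rhom_cst3: "rhom (cst3 :: 'a::comm_ring_1 \<Rightarrow> 'a poly3)"
  by (auto simp: rhom_def cst3_def one_pCons)

lemma rhom_const: "rhom (\<lambda>a::'a::comm_ring_1. [:a:])"
  by (auto simp: rhom_def one_pCons)

lemma rhom_poly: "rhom (\<lambda>p. poly p c)"
  by (auto simp: rhom_def)

lemma rhom_o: "rhom f \<Longrightarrow> rhom g \<Longrightarrow> rhom (\<lambda>x. g (f x))"
  by (auto simp: rhom_def)

lemma rhom_kappa: "rhom (\<lambda>a::'a::comm_ring_1. [:[:a:]:])"
  using rhom_o[OF rhom_const rhom_const] .

lemma S3_linform: "rhom f \<Longrightarrow> S3 f x y z (linform u v w) = f u * x + f v * y + f w * z"
  by (simp add: linform_def ev1_add rhom_S3 rhomD S3_cst3 S3_X S3_Y S3_Z)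

lemma dvd_prod_list_pow: "(\<forall>z\<in>set xs. (t::'a::comm_ring_1) dvd z) \<Longrightarrow> t ^ length xs dvd prod_list xs"
  by (induct xs) (simp_all add: mult_dvd_mono)

lemma cancel_t:
  fixes p r :: "'b::idom_divide poly"
  assumes "[:0,1:] ^ e dvd p * r" "poly p 0 \<noteq> 0"
  shows "[:0,1:] ^ e dvd r"
  using assms(1)
proof (induct e arbitrary: r)
  case 0 then show ?case by simp
next
  case (Suc e)
  have "[:0,1:] dvd p * r" using Suc.prems by (metis dvd_mult_left power_Suc)
  then have "poly (p * r) 0 = 0" using poly_eq_0_iff_dvd[of "p * r" 0] by simp
  then have "poly r 0 = 0" using assms(2) by simp
  then have "[:0,1:] dvd r" using poly_eq_0_iff_dvd[of r 0] by simp
  then obtain r' where r': "r = [:0,1:] * r'" by (auto elim: dvdE)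
  have F: "[:0,1:] * [:0,1:] ^ e dvd [:0,1:] * (p * r')" using Suc.prems r'
    by (simp only: power_Suc mult.left_commute)
  have nz: "[:0,1:] \<noteq> (0::'b::idom_divide poly)" by simp
  have "[:0,1:] ^ e dvd p * r'" using F by (subst (asm) dvd_times_left_cancel_iff[OF nz])
  then have "[:0,1:] ^ e dvd r'" by (rule Suc.hyps)
  then have "[:0,1:] * [:0,1:] ^ e dvd [:0,1:] * r'" by (rule mult_dvd_mono[OF dvd_refl])
  then show ?case using r' by (simp only: power_Suc)
qed

lemma deg_ev1:
  fixes x :: "'b::comm_ring_1 poly"
  assumes h: "rhom h" and x: "degree x \<le> 1"
  shows "(\<forall>i. coeff p i \<noteq> 0 \<longrightarrow> degree (h (coeff p i)) + i \<le> D) \<Longrightarrow> degree (ev1 h x p) \<le> D"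
proof (induct p arbitrary: D)
  case 0 then show ?case by simp
next
  case (pCons a p)
  have ha: "degree (h a) \<le> D"
  proof (cases "a = 0")
    case True then show ?thesis using rhomD(4)[OF h] by simp
  next
    case False then show ?thesis using pCons.prems[rule_format, of 0] by simp
  qed
  show ?case
  proof (cases "p = 0")
    case True then show ?thesis using ha by (simp add: ev1_pCons[OF h])
  next
    case False
    then have "coeff p (degree p) \<noteq> 0" by simp
    then have D1: "D \<ge> 1" using pCons.prems[rule_format, of "Suc (degree p)"] by simp
    have "\<forall>i. coeff p i \<noteq> 0 \<longrightarrow> degree (h (coeff p i)) + i \<le> D - 1"
      using pCons.prems[rule_format, of "Suc _"] by fastforce
    then have ih: "degree (ev1 h x p) \<le> D - 1" using pCons.hyps by blast
    have "degree (x * ev1 h x p) \<le> degree x + degree (ev1 h x p)" by (rule degree_mult_le)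
    also have "\<dots> \<le> D" using x ih D1 by linarith
    finally have "degree (x * ev1 h x p) \<le> D" .
    then show ?thesis using ha by (simp add: ev1_pCons[OF h] degree_add_le)
  qed
qed

lemma key:
  fixes a b c a' b' c' :: "'a::field" and T :: "'a poly3"
  assumes frob: "\<And>u v :: 'a poly poly. (u + v) ^ q = u ^ q + v ^ q"
    and eq: "e \<le> q + 1" and de: "d < e"
    and FP: "b * c^q + b^q * c - a * a^q = 0"
    and LQ: "b' * c^q + b^q * c' - a' * a^q = 0"
    and TQ: "b * c'^q + b'^q * c - a * a'^q = 0"
    and hom: "homogeneous3 d T"
    and sub: "subscheme_contained (hermitian q) a b c e T"
  shows "S3 (\<lambda>\<alpha>. [:[:\<alpha>:]:]) ([:[:a:]:] * [:[:0,1:]:] + [:[:a':]:] * [:0,1:])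
     ([:[:b:]:] * [:[:0,1:]:] + [:[:b':]:] * [:0,1:]) ([:[:c:]:] * [:[:0,1:]:] + [:[:c':]:] * [:0,1:]) T = 0"
proof -
  define k where "k = (\<lambda>\<alpha>::'a. [:[:\<alpha>:]:])"
  define s where "s = ([:[:0,1:]:] :: 'a poly poly)"
  define t where "t = ([:0,1:] :: 'a poly poly)"
  define x where "x = k a * s + k a' * t"
  define y where "y = k b * s + k b' * t"
  define z where "z = k c * s + k c' * t"
  define \<Phi> where "\<Phi> = S3 k x y z"
  have rk: "rhom k" unfolding k_def by (rule rhom_kappa)
  have rP: "rhom \<Phi>" unfolding \<Phi>_def by (rule rhom_S3[OF rk])
  have lin: "t dvd \<Phi> (linform u v w)" if "u * a + v * b + w * c = 0" for u v w
  proof -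
    have "\<Phi> (linform u v w) = k u * x + k v * y + k w * z"
      unfolding \<Phi>_def by (rule S3_linform[OF rk])
    also have "\<dots> = k (u * a + v * b + w * c) * s + k (u * a' + v * b' + w * c') * t"
      unfolding x_def y_def z_def by (simp add: rhomD[OF rk] algebra_simps)
    finally show ?thesis using that by (simp add: rhomD[OF rk])
  qed
  have ideal: "t ^ e dvd \<Phi> G" if "G \<in> point_ideal_pow a b c e" for G
    using that unfolding point_ideal_pow_def
  proof (induct rule: ideal_gen.induct)
    case zero then show ?case by (simp add: rhomD[OF rP])
  next
    case (step g h r)
    from step(1) obtain ls where g: "g = prod_list (map (\<lambda>(u, v, w). linform u v w) ls)"
      and ls: "length ls = e" "\<forall>(u, v, w) \<in> set ls. u * a + v * b + w * c = 0" by blast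
    have "\<Phi> g = prod_list (map \<Phi> (map (\<lambda>(u, v, w). linform u v w) ls))"
      unfolding g by (rule rhom_prod_list[OF rP])
    moreover have "t ^ length (map \<Phi> (map (\<lambda>(u, v, w). linform u v w) ls))
        dvd prod_list (map \<Phi> (map (\<lambda>(u, v, w). linform u v w) ls))"
      using ls(2) by (intro dvd_prod_list_pow) (auto intro: lin)
    ultimately have "t ^ e dvd \<Phi> g" using ls(1) by simp
    then show ?case using step(3) by (simp add: rhomD[OF rP])
  qed
  have pw: "(k \<alpha> * s + k \<beta> * t) ^ q = k \<alpha> ^ q * s ^ q + k \<beta> ^ q * t ^ q" for \<alpha> \<beta>
    by (simp add: frob power_mult_distrib)
  have PF: "\<Phi> (hermitian q) = y * z ^ q + y ^ q * z - x * x ^ q"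
    unfolding \<Phi>_def hermitian_def
    by (simp add: rhomD[OF rhom_S3[OF rk]] S3_X[OF rk] S3_Y[OF rk] S3_Z[OF rk])
  also have "\<dots> = k (b * c^q + b^q * c - a * a^q) * (s * s^q) + k (b' * c^q + b^q * c' - a' * a^q) * (t * s^q)
     + k (b * c'^q + b'^q * c - a * a'^q) * (s * t^q) + k (b' * c'^q + b'^q * c' - a' * a'^q) * (t * t^q)"
    unfolding x_def y_def z_def pw by (simp add: rhomD[OF rk] algebra_simps)
  also have "\<dots> = k (b' * c'^q + b'^q * c' - a' * a'^q) * t ^ (q + 1)"
    using FP LQ TQ by (simp add: rhomD[OF rk])
  finally have "t ^ (q + 1) dvd \<Phi> (hermitian q)" by simp
  then have tF: "t ^ e dvd \<Phi> (hermitian q)" using eq by (meson dvd_trans le_imp_power_dvd)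
  from sub obtain U A u where U: "eval3 U a b c \<noteq> 0"
    and UA: "U * T - A * hermitian q \<in> point_ideal_pow a b c e"
    unfolding subscheme_contained_def by blast
  have "t ^ e dvd \<Phi> (U * T - A * hermitian q)" by (rule ideal[OF UA])
  then have "t ^ e dvd \<Phi> U * \<Phi> T - \<Phi> A * \<Phi> (hermitian q)" by (simp add: rhomD[OF rP])
  moreover have "t ^ e dvd \<Phi> A * \<Phi> (hermitian q)" using tF by simp
  ultimately have "t ^ e dvd (\<Phi> U * \<Phi> T - \<Phi> A * \<Phi> (hermitian q)) + \<Phi> A * \<Phi> (hermitian q)"
    by (rule dvd_add)
  then have UT: "t ^ e dvd \<Phi> U * \<Phi> T" by simp
  define \<Psi> where "\<Psi> = (\<lambda>p::'a poly poly. poly (poly p 0) 1)"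
  have rPsi: "rhom \<Psi>" unfolding \<Psi>_def by (rule rhom_o[OF rhom_poly rhom_poly])
  have "\<Psi> (\<Phi> U) = S3 (\<lambda>\<alpha>. \<Psi> (k \<alpha>)) (\<Psi> x) (\<Psi> y) (\<Psi> z) U"
    unfolding \<Phi>_def by (rule S3_comp[OF rk rPsi])
  also have "\<dots> = eval3 U a b c"
    unfolding eval3_S3 by (simp add: \<Psi>_def k_def x_def y_def z_def s_def t_def)
  finally have "poly (\<Phi> U) 0 \<noteq> 0" using U by (auto simp: \<Psi>_def)
  then have tT: "t ^ e dvd \<Phi> T" using UT unfolding t_def by (rule cancel_t[rotated])
  have dz: "degree w \<le> 1" if "w = k \<alpha> * s + k \<beta> * t" for w \<alpha> \<beta>
  proof -
    have "w = [:[:0, \<alpha>:], [:\<beta>:]:]" using that by (simp add: k_def s_def t_def)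
    then show ?thesis by simp
  qed
  have degT: "degree (\<Phi> T) \<le> d"
    unfolding \<Phi>_def S3_def
  proof (rule deg_ev1[OF rhom_ev1[OF rhom_ev1[OF rk]] dz[OF z_def]], intro allI impI)
    fix kk assume nz: "coeff T kk \<noteq> 0"
    then obtain j where "coeff (coeff T kk) j \<noteq> 0" by (metis leading_coeff_0_iff)
    then obtain i where "coeff (coeff (coeff T kk) j) i \<noteq> 0" by (metis leading_coeff_0_iff)
    then have "i + j + kk = d" using hom unfolding homogeneous3_def coeff3_def by blast
    then have kkd: "kk \<le> d" by simp
    have "degree (ev1 (ev1 k x) y (coeff T kk)) \<le> d - kk"
    proof (rule deg_ev1[OF rhom_ev1[OF rk] dz[OF y_def]], intro allI impI)
      fix j assume nj: "coeff (coeff T kk) j \<noteq> 0"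
      then obtain i where "coeff (coeff (coeff T kk) j) i \<noteq> 0" by (metis leading_coeff_0_iff)
      then have "i + j + kk = d" using hom unfolding homogeneous3_def coeff3_def by blast
      then have jd: "j \<le> d - kk" by simp
      have "degree (ev1 k x (coeff (coeff T kk) j)) \<le> d - kk - j"
      proof (rule deg_ev1[OF rk dz[OF x_def]], intro allI impI)
        fix i assume "coeff (coeff (coeff T kk) j) i \<noteq> 0"
        then have "i + j + kk = d" using hom unfolding homogeneous3_def coeff3_def by blast
        then show "degree (k (coeff (coeff (coeff T kk) j) i)) + i \<le> d - kk - j"
          by (simp add: k_def)
      qed
      then show "degree (ev1 k x (coeff (coeff T kk) j)) + j \<le> d - kk" using jd by linarith
    qed
    then show "degree (ev1 (ev1 k x) y (coeff T kk)) + kk \<le> d" using kkd by linarith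
  qed
  have "\<Phi> T = 0"
  proof (rule ccontr)
    assume "\<Phi> T \<noteq> 0"
    then have "degree (t ^ e) \<le> degree (\<Phi> T)" using tT by (rule dvd_imp_degree_le[rotated])
    moreover have "degree (t ^ e) = e" by (simp add: t_def degree_power_eq)
    ultimately show False using degT de by linarith
  qed
  then show ?thesis unfolding \<Phi>_def x_def y_def z_def k_def s_def t_def .
qed

definition der :: "('b::comm_ring_1 \<Rightarrow> 'b) \<Rightarrow> bool" where
  "der D \<longleftrightarrow> (\<forall>x y. D (x + y) = D x + D y) \<and> (\<forall>x y. D (x * y) = D x * y + x * D y)"

lemma derD:
  assumes "der D"
  shows "D (x + y) = D x + D y" "D (x * y) = D x * y + x * D y" "D 0 = 0" "D 1 = 0"
    "D (- x) = - D x" "D (x - y) = D x - D y"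
proof -
  show a: "D (x + y) = D x + D y" "D (x * y) = D x * y + x * D y" using assms by (auto simp: der_def)
  have "D (0 + 0) = D 0 + D 0" using assms unfolding der_def by blast
  then show z: "D 0 = 0" by simp
  have "D (1 * 1) = D 1 * 1 + 1 * D 1" using assms unfolding der_def by blast
  then show "D 1 = 0" by simp
  have "D (- x + x) = D (- x) + D x" using assms unfolding der_def by blast
  then have "D (- x) + D x = 0" using z by simp
  then show m: "D (- x) = - D x" by (subst eq_neg_iff_add_eq_0)
  have "D (x + - y) = D x + D (- y)" using assms unfolding der_def by blast
  moreover have "D (- y) = - D y"
  proof -
    have "D (- y + y) = D (- y) + D y" using assms unfolding der_def by blast
    then have "D (- y) + D y = 0" using z by simp
    then show ?thesis by (subst eq_neg_iff_add_eq_0)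
  qed
  ultimately show "D (x - y) = D x - D y" by (simp only: diff_conv_add_uminus)
qed

lemma der_power: "der D \<Longrightarrow> D (x ^ n) = of_nat n * x ^ (n - 1) * D x"
proof (induct n)
  case 0 then show ?case by (simp add: derD)
next
  case (Suc n)
  have "D (x ^ Suc n) = D x * x ^ n + x * D (x ^ n)" by (simp add: derD[OF Suc.prems])
  also have "\<dots> = of_nat (Suc n) * x ^ n * D x"
  proof (cases n)
    case 0 then show ?thesis using Suc by simp
  next
    case (Suc m)
    then show ?thesis using Suc.hyps[OF Suc.prems] by (simp add: algebra_simps)
  qed
  finally show ?case by simp
qed

lemma der_sum: "der D \<Longrightarrow> D (sum f A) = sum (\<lambda>i. D (f i)) A"
  by (induct A rule: infinite_finite_induct) (auto simp: derD)

lemma der_pderiv: "der (pderiv :: 'b::idom poly \<Rightarrow> _)"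
  unfolding der_def by (simp add: pderiv_add pderiv_mult mult_ac)

lemma der_map_poly:
  assumes D: "der D" shows "der (map_poly D)"
proof -
  have z: "D 0 = 0" using derD[OF D] by simp
  have add: "map_poly D (p + q) = map_poly D p + map_poly D q" for p q
    by (rule poly_eqI) (simp add: coeff_map_poly z derD[OF D])
  have mult: "map_poly D (p * q) = map_poly D p * q + p * map_poly D q" for p q
  proof (rule poly_eqI)
    fix n
    have "coeff (map_poly D (p * q)) n = (\<Sum>i\<le>n. D (coeff p i * coeff q (n - i)))"
      by (simp add: coeff_map_poly z coeff_mult der_sum[OF D])
    also have "\<dots> = (\<Sum>i\<le>n. D (coeff p i) * coeff q (n - i)) + (\<Sum>i\<le>n. coeff p i * D (coeff q (n - i)))"
      by (simp add: derD[OF D] sum.distrib)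
    also have "\<dots> = coeff (map_poly D p * q + p * map_poly D q) n"
      by (simp add: coeff_mult coeff_map_poly z)
    finally show "coeff (map_poly D (p * q)) n = coeff (map_poly D p * q + p * map_poly D q) n" .
  qed
  show ?thesis unfolding der_def using add mult by blast
qed

lemma rhom_of_nat: "rhom f \<Longrightarrow> f (of_nat n) = of_nat n"
  by (induct n) (simp_all add: rhomD)

lemma S3_id1: "ev1 cst3 varX p = [:[:p:]:]"
proof (induct p)
  case (pCons a p)
  then show ?case by (simp only: ev1_pCons[OF rhom_cst3]) (simp add: cst3_def varX_def)
qed simp

lemma S3_id2: "ev1 (\<lambda>p. [:[:p:]:]) varY Q = [:Q:]"
  by (induct Q) (simp_all add: ev1_pCons rhom_o[OF rhom_const rhom_const] varY_def)

lemma S3_id3: "ev1 (\<lambda>Q. [:Q:]) varZ G = G"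
  by (induct G) (simp_all add: ev1_pCons rhom_const varZ_def)

lemma S3_id: "S3 cst3 varX varY varZ G = G"
proof -
  have 1: "ev1 cst3 varX = (\<lambda>p. [:[:p:]:])" by (rule ext, rule S3_id1)
  have 2: "ev1 (\<lambda>p. [:[:p:]:]) varY = (\<lambda>Q. [:Q:])" by (rule ext, rule S3_id2)
  show ?thesis unfolding S3_def 1 2 by (rule S3_id3)
qed

lemma S3_back:
  assumes "S3 cst3 xB yB zB xA = varX" "S3 cst3 xB yB zB yA = varY" "S3 cst3 xB yB zB zA = varZ"
  shows "S3 cst3 xB yB zB (S3 cst3 xA yA zA G) = G"
proof -
  have "S3 cst3 xB yB zB (S3 cst3 xA yA zA G)
      = S3 (\<lambda>a. S3 cst3 xB yB zB (cst3 a)) varX varY varZ G"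
    using S3_comp[OF rhom_cst3 rhom_S3[OF rhom_cst3], of xB yB zB xA yA zA G] assms by simp
  also have "\<dots> = G" by (simp add: S3_cst3[OF rhom_cst3] S3_id)
  finally show ?thesis .
qed

lemma lin_comb:
  "cst3 \<alpha> * linform u v w + cst3 \<beta> * linform u' v' w' + cst3 \<gamma> * linform u'' v'' w''
   = linform (\<alpha> * u + \<beta> * u' + \<gamma> * u'') (\<alpha> * v + \<beta> * v' + \<gamma> * v'') (\<alpha> * w + \<beta> * w' + \<gamma> * w'')"
  unfolding linform_def by (simp add: rhomD[OF rhom_cst3] algebra_simps)

lemma linform_unit: "linform 1 0 0 = varX" "linform 0 1 0 = varY" "linform 0 0 1 = varZ"
  "linform 0 0 \<kappa> = cst3 \<kappa> * varZ"
  unfolding linform_def by (simp_all add: rhomD[OF rhom_cst3])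

lemma poly_linform0: "poly (linform u v w) 0 = [:[:u:]:] * [:[:0,1:]:] + [:[:v:]:] * [:0,1:]"
  by (simp add: linform_def cst3_def varX_def varY_def varZ_def)

lemma change:
  fixes a b c a' b' c' a'' b'' c'' xu xv xw yu yv yw zu zv zw \<alpha> \<beta> \<gamma> :: "'a::field" and T :: "'a poly3"
  assumes key: "S3 (\<lambda>\<alpha>. [:[:\<alpha>:]:]) ([:[:a:]:] * [:[:0,1:]:] + [:[:a':]:] * [:0,1:])
     ([:[:b:]:] * [:[:0,1:]:] + [:[:b':]:] * [:0,1:]) ([:[:c:]:] * [:[:0,1:]:] + [:[:c':]:] * [:0,1:]) T = 0"
  and i1: "a*xu + a'*yu + a''*zu = 1" "a*xv + a'*yv + a''*zv = 0" "a*xw + a'*yw + a''*zw = 0"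
  and i2: "b*xu + b'*yu + b''*zu = 0" "b*xv + b'*yv + b''*zv = 1" "b*xw + b'*yw + b''*zw = 0"
  and i3: "c*xu + c'*yu + c''*zu = 0" "c*xv + c'*yv + c''*zv = 0" "c*xw + c'*yw + c''*zw = 1"
  and l1: "\<alpha>*a + \<beta>*b + \<gamma>*c = 0" and l2: "\<alpha>*a' + \<beta>*b' + \<gamma>*c' = 0"
  and l3: "\<alpha>*a'' + \<beta>*b'' + \<gamma>*c'' \<noteq> 0"
  shows "linform \<alpha> \<beta> \<gamma> dvd T"
proof -
  define xA where "xA = linform a a' (a'' :: 'a)"
  define yA where "yA = linform b b' (b'' :: 'a)"
  define zA where "zA = linform c c' (c'' :: 'a)"
  define xB where "xB = linform xu xv (xw :: 'a)"
  define yB where "yB = linform yu yv (yw :: 'a)"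
  define zB where "zB = linform zu zv (zw :: 'a)"
  define \<kappa> where "\<kappa> = \<alpha>*a'' + \<beta>*b'' + \<gamma>*c''"
  define PA where "PA = S3 cst3 xA yA zA"
  define PB where "PB = S3 cst3 xB yB zB"
  have rA: "rhom PA" unfolding PA_def by (rule rhom_S3[OF rhom_cst3])
  have rB: "rhom PB" unfolding PB_def by (rule rhom_S3[OF rhom_cst3])
  have bk: "PB (PA G) = G" for G
    unfolding PA_def PB_def
  proof (rule S3_back)
    show "S3 cst3 xB yB zB xA = varX"
      unfolding xA_def xB_def yB_def zB_def
      by (simp only: S3_linform[OF rhom_cst3] lin_comb i1 flip: linform_unit)
    show "S3 cst3 xB yB zB yA = varY"
      unfolding yA_def xB_def yB_def zB_def
      by (simp only: S3_linform[OF rhom_cst3] lin_comb i2 flip: linform_unit)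
    show "S3 cst3 xB yB zB zA = varZ"
      unfolding zA_def xB_def yB_def zB_def
      by (simp only: S3_linform[OF rhom_cst3] lin_comb i3 flip: linform_unit)
  qed
  have Al: "PA (linform \<alpha> \<beta> \<gamma>) = cst3 \<kappa> * varZ"
    unfolding PA_def xA_def yA_def zA_def
    by (simp only: S3_linform[OF rhom_cst3] lin_comb) (simp add: l1 l2 \<kappa>_def linform_unit mult.commute)
  have "poly (PA T) 0 = S3 (\<lambda>\<alpha>. poly (cst3 \<alpha>) 0) (poly xA 0) (poly yA 0) (poly zA 0) T"
    unfolding PA_def by (rule S3_comp[OF rhom_cst3 rhom_poly])
  also have "\<dots> = 0"
  proof -
    have "(\<lambda>\<alpha>. poly (cst3 \<alpha>) 0) = (\<lambda>\<alpha>::'a. [:[:\<alpha>:]:])" by (simp add: cst3_def)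
    then show ?thesis using key by (simp only: xA_def yA_def zA_def poly_linform0)
  qed
  finally have "[:-0, 1:] dvd PA T" using poly_eq_0_iff_dvd by blast
  then obtain H where H: "PA T = varZ * H" unfolding varZ_def by (auto elim: dvdE)
  have T: "T = PB varZ * PB H" using bk[of T] H by (simp add: rhomD[OF rB])
  have l: "linform \<alpha> \<beta> \<gamma> = cst3 \<kappa> * PB varZ"
  proof -
    have "PB (cst3 \<kappa>) = cst3 \<kappa>" unfolding PB_def by (rule S3_cst3[OF rhom_cst3])
    then show ?thesis using bk[of "linform \<alpha> \<beta> \<gamma>"] Al by (simp add: rhomD(2)[OF rB])
  qed
  have k0: "\<kappa> \<noteq> 0" using l3 by (simp add: \<kappa>_def)
  have "cst3 (inverse \<kappa>) * cst3 \<kappa> = 1" using k0 by (simp add: rhomD(3)[OF rhom_cst3] flip: rhomD(2)[OF rhom_cst3])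
  then have "T = linform \<alpha> \<beta> \<gamma> * (cst3 (inverse \<kappa>) * PB H)"
    unfolding T l by (simp add: algebra_simps)
  then show ?thesis by (rule dvdI)
qed

lemma eval_herm: "eval3 (hermitian q) a b c = b * c^q + b^q * c - a * a^q"
  unfolding eval3_S3 hermitian_def
  by (simp add: rhomD[OF rhom_S3[OF rhom_id(2)]] S3_X[OF rhom_id(2)] S3_Y[OF rhom_id(2)] S3_Z[OF rhom_id(2)])

lemma tangent:
  fixes a b c :: "'a::field"
  assumes q0: "of_nat q = (0::'a)"
  shows "tangent_line (hermitian q) a b c = linform (- (a^q)) (c^q) (b^q)"
proof -
  have dX: "der (map_poly (map_poly pderiv) :: 'a poly3 \<Rightarrow> _)"
    by (intro der_map_poly der_pderiv)
  have dY: "der (map_poly pderiv :: 'a poly3 \<Rightarrow> _)"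
    by (intro der_map_poly der_pderiv)
  have dZ: "der (pderiv :: 'a poly3 \<Rightarrow> _)"
    by (rule der_pderiv)
  have e: "eval3 G a b c = S3 (\<lambda>x. x) a b c G" for G by (rule eval3_S3)
  note ev = rhomD[OF rhom_S3[OF rhom_id(2)]] S3_X[OF rhom_id(2)] S3_Y[OF rhom_id(2)] S3_Z[OF rhom_id(2)]
    rhom_of_nat[OF rhom_S3[OF rhom_id(2)]]
  have q1: "of_nat (q + 1) = (1::'a)" using q0 by simp
  have vX: "map_poly (map_poly pderiv) varX = (1::'a poly3)" "map_poly (map_poly pderiv) varY = (0::'a poly3)"
    "map_poly (map_poly pderiv) varZ = (0::'a poly3)"
    by (simp_all add: varX_def varY_def varZ_def one_pCons pderiv_pCons map_poly_pCons)
  have vY: "map_poly pderiv varX = (0::'a poly3)" "map_poly pderiv varY = (1::'a poly3)"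
    "map_poly pderiv varZ = (0::'a poly3)"
    by (simp_all add: varX_def varY_def varZ_def one_pCons pderiv_pCons map_poly_pCons)
  have vZ: "pderiv varX = (0::'a poly3)" "pderiv varY = (0::'a poly3)" "pderiv varZ = (1::'a poly3)"
    by (simp_all add: varX_def varY_def varZ_def one_pCons pderiv_pCons map_poly_pCons)
  have "pdX (hermitian q :: 'a poly3) = - (of_nat (q + 1) * varX ^ q)"
    unfolding pdX_def hermitian_def
    by (simp only: derD[OF dX] der_power[OF dX] vX) simp
  then have 1: "eval3 (pdX (hermitian q)) a b c = - (a ^ q)"
    unfolding e by (simp add: ev q1 q0)
  have "pdY (hermitian q :: 'a poly3) = varZ ^ q + of_nat q * varY ^ (q - 1) * varZ"
    unfolding pdY_def hermitian_def
    by (simp only: derD[OF dY] der_power[OF dY] vY) simp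
  then have 2: "eval3 (pdY (hermitian q)) a b c = c ^ q"
    unfolding e by (simp add: ev q0)
  have "pdZ (hermitian q :: 'a poly3) = varY * (of_nat q * varZ ^ (q - 1)) + varY ^ q"
    unfolding pdZ_def hermitian_def
    by (simp only: derD[OF dZ] der_power[OF dZ] vZ) simp
  then have 3: "eval3 (pdZ (hermitian q)) a b c = b ^ q"
    unfolding e by (simp add: ev q0)
  show ?thesis unfolding tangent_line_def 1 2 3 ..
qed

lemma pow_card:
  fixes x :: "'a :: {field, finite}"
  shows "x ^ card (UNIV :: 'a set) = x"
proof (cases "x = 0")
  case False
  have "x * (\<Prod>y\<in>UNIV-{0}. x * y) = x * x ^ (card (UNIV :: 'a set) - 1) * \<Prod>(UNIV-{0})"
    by (simp add: prod.distrib mult_ac)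
  also have "x * x ^ (card (UNIV :: 'a set) - 1) = x ^ Suc (card (UNIV :: 'a set) - 1)"
    by (subst power_Suc) auto
  also have "Suc (card (UNIV :: 'a set) - 1) = card (UNIV :: 'a set)"
    using finite_UNIV_card_ge_0[where ?'a = 'a] by simp
  also have "(\<Prod>y\<in>UNIV-{0}. x * y) = (\<Prod>y\<in>UNIV-{0}. y)"
    by (rule prod.reindex_bij_witness[of _ "\<lambda>y. y / x" "\<lambda>y. x * y"]) (use False in auto)
  finally show ?thesis
    by simp
qed (use finite_UNIV_card_ge_0[where ?'a = 'a] in auto)

lemma card_zero: "of_nat (card (UNIV :: 'a::{comm_ring_1,finite} set)) = (0::'a)"
proof -
  have "(\<Sum>x\<in>UNIV. x) = (\<Sum>x\<in>UNIV. x + (1::'a))"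
    by (rule sum.reindex_bij_witness[of _ "\<lambda>x. x + 1" "\<lambda>x. x - 1"]) auto
  also have "\<dots> = (\<Sum>x\<in>UNIV. x) + of_nat (card (UNIV :: 'a set))"
    by (simp add: sum.distrib)
  finally show ?thesis by simp
qed

theorem lemma3p2:
  fixes q e d :: nat and a b c :: "'a::{field,finite}" and T :: "'a poly3"
  assumes "\<exists>p k. prime p \<and> k \<ge> 1 \<and> q = p ^ k"
    and "CARD('a) = q ^ 2"
    and "2 \<le> e" and "e \<le> q + 1"
    and "(a, b, c) \<noteq> (0, 0, 0)"
    and "eval3 (hermitian q) a b c = 0"
    and "T \<noteq> 0" and "homogeneous3 d T" and "d \<le> e - 1"
    and "subscheme_contained (hermitian q) a b c e T"
  shows "tangent_line (hermitian q) a b c dvd T"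
proof -
  from assms(1) obtain p k where p: "prime p" and k: "k \<ge> 1" and qpk: "q = p ^ k" by blast
  have cpos: "CHAR('a) > 0" by (rule finite_imp_CHAR_pos) simp
  have cpr: "prime CHAR('a)" using cpos by (rule prime_CHAR_semidom)
  have "CHAR('a) dvd CARD('a)" using card_zero[where 'a='a] by (simp add: of_nat_eq_0_iff_char_dvd)
  then have "CHAR('a) dvd p ^ (k * 2)" using assms(2) qpk by (simp add: power_mult)
  then have "CHAR('a) dvd p" by (rule prime_dvd_power[OF cpr])
  then have cp: "CHAR('a) = p" by (rule primes_dvd_imp_eq[OF cpr p])
  have "CHAR('a) dvd q" using cp qpk k by (simp add: dvd_power)
  then have q0: "of_nat q = (0::'a)" by (simp add: of_nat_eq_0_iff_char_dvd)
  have q1: "q \<ge> 1" using qpk prime_gt_0_nat[OF p] by (simp add: Suc_le_eq)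
  have frob: "(u + v) ^ q = u ^ q + v ^ q" for u v :: "'a poly poly"
    by (rule freshmans_dream'[where n = k]) (simp_all add: cp p qpk)
  have pc: "x ^ q ^ 2 = x" for x :: 'a using pow_card[of x] assms(2) by simp
  have pq: "(x ^ q) ^ q = x" for x :: 'a using pc[of x] by (simp add: power_mult[symmetric] power2_eq_square)
  have z0: "(0::'a) ^ q = 0" using q1 by simp
  have FP: "b * c^q + b^q * c - a * a^q = 0" using assms(6) eval_herm by metis
  have de: "d < e" using assms(3,9) by linarith
  note tg = tangent[OF q0, of a b c]
  show ?thesis
  proof (cases "b = 0")
    case False
    define g where "g = b ^ q"
    define h where "h = a ^ q"
    have g0: "g \<noteq> 0" using False by (simp add: g_def)
    have key: "S3 (\<lambda>\<alpha>. [:[:\<alpha>:]:]) ([:[:a:]:] * [:[:0,1:]:] + [:[:g:]:] * [:0,1:])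
     ([:[:b:]:] * [:[:0,1:]:] + [:[:0:]:] * [:0,1:]) ([:[:c:]:] * [:[:0,1:]:] + [:[:h:]:] * [:0,1:]) T = 0"
    proof (rule key[OF frob assms(4) de FP _ _ assms(8) assms(10)])
      show "0 * c ^ q + b ^ q * h - g * a ^ q = 0" by (simp add: g_def h_def)
      show "b * h ^ q + 0 ^ q * c - a * g ^ q = 0" by (simp add: g_def h_def pq z0)
    qed
    have "linform (- (a^q)) (c^q) (b^q) dvd T"
      by (rule change[OF key, where xu=0 and xv="1/b" and xw=0 and yu="1/g" and yv="-a/(b*g)" and yw=0
            and zu="-h/g" and zv="-c/b + h*a/(b*g)" and zw=1 and a''=0 and b''=0 and c''=1])
         (use False g0 FP in \<open>simp_all add: field_simps g_def h_def\<close>)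
    then show ?thesis by (simp add: tg)
  next
    case True
    have a0: "a = 0" using FP True z0 by simp
    have c0: "c \<noteq> 0" using assms(5) a0 True by simp
    have key: "S3 (\<lambda>\<alpha>. [:[:\<alpha>:]:]) ([:[:a:]:] * [:[:0,1:]:] + [:[:1:]:] * [:0,1:])
     ([:[:b:]:] * [:[:0,1:]:] + [:[:0:]:] * [:0,1:]) ([:[:c:]:] * [:[:0,1:]:] + [:[:0:]:] * [:0,1:]) T = 0"
    proof (rule key[OF frob assms(4) de FP _ _ assms(8) assms(10)])
      show "0 * c ^ q + b ^ q * 0 - 1 * a ^ q = 0" by (simp add: a0 z0)
      show "b * 0 ^ q + 0 ^ q * c - a * 1 ^ q = 0" by (simp add: a0 True z0)
    qed
    have "linform (- (a^q)) (c^q) (b^q) dvd T"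
      by (rule change[OF key, where xu=0 and xv=0 and xw="1/c" and yu=1 and yv=0 and yw=0
            and zu=0 and zv=1 and zw=0 and a''=0 and b''=1 and c''=0])
         (use True a0 c0 z0 in \<open>simp_all add: field_simps\<close>)
    then show ?thesis by (simp add: tg)
  qed
qed

end
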